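(* Let $\epsilon\ge 0$, let $\psi=\frac{1+\epsilon+\sqrt{\epsilon^2+6\epsilon+5}}{2}$ and $z=\lfloor\psi\rfloor$. For every unweighted congestion game $\mathcal{G}$ with affine latency functions, $\epsilon\text{-PoA}(\mathcal{G})\le\frac{(1+\epsilon)(z^2+3z+1)}{2z-\epsilon}$.
   Context: A weighted congestion game consists of a finite set $[n]=\{1,\dots,n\}$ of players, a finite set $E$ of resources, for each player $i$ a weight $w_i>0$ and a nonempty finite strategy set $\Sigma_i\subseteq 2^E$, and for each resource $e$ a latency function $\ell_e:\mathbb{R}_{\ge 0}\to\mathbb{R}_{\ge 0}$. It is unweighted if $w_i=1$ for all $i$. Affine latency functions means $\ell_e(x)=\alpha_e x+\beta_e$ with $\alpha_e,\beta_e\ge 0$. For a strategy profile $S=(s_1,\dots,s_n)\in\prod_i\Sigma_i$, the congestion of $e$ is $L_e(S)=\sum_{i:\,e\in s_i}w_i$, the cost of player $i$ is $c_i(S)=\sum_{e\in s_i}\ell_e(L_e(S))$, and the social cost is $\mathrm{SUM}(S)=\sum_{i\in[n]}c_i(S)$; $S^*$ denotes a profile minimizing $\mathrm{SUM}$. For $t\in\Sigma_i$, $(S_{-i}\diamond t)$ denotes the profile obtained from $S$ by replacing $s_i$ with $t$. For $\epsilon\ge 0$, $S$ is an $\epsilon$-approximate pure Nash equilibrium ($\epsilon$-PNE) if $c_i(S)\le(1+\epsilon)c_i(S_{-i}\diamond t)$ for all $i\in[n]$ and all $t\in\Sigma_i$. The $\epsilon$-approximate price of anarchy is $\epsilon\text{-PoA}(\mathcal{G})=\max_{S\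 \epsilon\text{-PNE}}\mathrm{SUM}(S)/\mathrm{SUM}(S^* )$. *)

theory Defs
  imports "HOL-Library.FuncSet" Complex_Main
begin

definition is_congestion_game ::
  "nat \<Rightarrow> 'e set \<Rightarrow> (nat \<Rightarrow> real) \<Rightarrow> (nat \<Rightarrow> 'e set set) \<Rightarrow> ('e \<Rightarrow> real \<Rightarrow> real) \<Rightarrow> bool" where
  "is_congestion_game n E w Str l \<longleftrightarrow>
     finite E \<and>
     (\<forall>i\<in>{1..n}. w i > 0 \<and> Str i \<noteq> {} \<and> finite (Str i) \<and> Str i \<subseteq> Pow E) \<and>
     (\<forall>e\<in>E. \<forall>x\<ge>0. l e x \<ge> 0)"

definition profiles :: "nat \<Rightarrow> (nat \<Rightarrow> 'e set set) \<Rightarrow> (nat \<Rightarrow> 'e set) set" where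
  "profiles n Str = (\<Pi>\<^sub>E i\<in>{1..n}. Str i)"

definition congestion :: "nat \<Rightarrow> (nat \<Rightarrow> real) \<Rightarrow> (nat \<Rightarrow> 'e set) \<Rightarrow> 'e \<Rightarrow> real" where
  "congestion n w S e = (\<Sum>i\<in>{i\<in>{1..n}. e \<in> S i}. w i)"

definition player_cost ::
  "nat \<Rightarrow> (nat \<Rightarrow> real) \<Rightarrow> ('e \<Rightarrow> real \<Rightarrow> real) \<Rightarrow> (nat \<Rightarrow> 'e set) \<Rightarrow> nat \<Rightarrow> real" where
  "player_cost n w l S i = (\<Sum>e\<in>S i. l e (congestion n w S e))"

definition social_cost ::
  "nat \<Rightarrow> (nat \<Rightarrow> real) \<Rightarrow> ('e \<Rightarrow> real \<Rightarrow> real) \<Rightarrow> (nat \<Rightarrow> 'e set) \<Rightarrow> real" where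
  "social_cost n w l S = (\<Sum>i\<in>{1..n}. player_cost n w l S i)"

text \<open>epsilon-approximate pure Nash equilibrium; S(i := t) is the profile (S_{-i} <> t).\<close>
definition is_eps_PNE ::
  "nat \<Rightarrow> (nat \<Rightarrow> real) \<Rightarrow> (nat \<Rightarrow> 'e set set) \<Rightarrow> ('e \<Rightarrow> real \<Rightarrow> real) \<Rightarrow> real \<Rightarrow> (nat \<Rightarrow> 'e set) \<Rightarrow> bool" where
  "is_eps_PNE n w Str l eps S \<longleftrightarrow>
     S \<in> profiles n Str \<and>
     (\<forall>i\<in>{1..n}. \<forall>t\<in>Str i.
        player_cost n w l S i \<le> (1 + eps) * player_cost n w l (S(i := t)) i)"

definition opt_cost ::
  "nat \<Rightarrow> (nat \<Rightarrow> real) \<Rightarrow> (nat \<Rightarrow> 'e set set) \<Rightarrow> ('e \<Rightarrow> real \<Rightarrow> real) \<Rightarrow> real" where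
  "opt_cost n w Str l = Min (social_cost n w l ` profiles n Str)"

definition eps_PoA ::
  "nat \<Rightarrow> (nat \<Rightarrow> real) \<Rightarrow> (nat \<Rightarrow> 'e set set) \<Rightarrow> ('e \<Rightarrow> real \<Rightarrow> real) \<Rightarrow> real \<Rightarrow> real" where
  "eps_PoA n w Str l eps =
     Max {social_cost n w l S / opt_cost n w Str l | S. is_eps_PNE n w Str l eps S}"

end

theory Submission
  imports Defs
begin

lemma aux4: "0 \<le> 4 * ((b::real) - a) \<Longrightarrow> a \<le> b" by simp

lemma key_ineq:
  fixes x y z :: nat
  shows "real (2*z+1) * real y * (real x + 1) \<le> real (z^2+3*z+1) * (real y)^2 + (real x)^2"
proof -
  consider "y = 0" | "y = 1" | "y \<ge> 2" by linarith
  then show ?thesis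
  proof cases
    case 1 then show ?thesis by simp
  next
    case 2
    have eq: "real (z^2+3*z+1) * (real y)^2 + (real x)^2 - real (2*z+1) * real y * (real x + 1)
       = (real x - real z) * (real x - real z - 1)"
      using 2 by (simp add: algebra_simps power2_eq_square)
    have "(real x - real z) * (real x - real z - 1) \<ge> 0"
    proof (cases "x \<le> z")
      case True
      then have "real x - real z \<le> 0" "real x - real z - 1 \<le> 0" by auto
      then show ?thesis by (simp add: mult_nonpos_nonpos)
    next
      case False
      then have "real x - real z \<ge> 0" "real x - real z - 1 \<ge> 0" by auto
      then show ?thesis by simp
    qed
    then show ?thesis using eq by linarith
  next
    case 3
    have eq: "4 * (real (z^2+3*z+1) * (real y)^2 + (real x)^2 - real (2*z+1) * real y * (real x + 1))
       = (2 * real x - (2 * real z + 1) * real y)^2 + (8 * real z + 3) * real y * (real y - 2)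
         + (8 * real z + 2) * real y"
      by (simp add: algebra_simps power2_eq_square)
    have a: "(8 * real z + 3) * real y * (real y - 2) \<ge> 0" using 3 by simp
    have b: "(8 * real z + 2) * real y \<ge> 0" by simp
    have c: "(2 * real x - (2 * real z + 1) * real y)^2 \<ge> 0" by simp
    have "0 \<le> 4 * (real (z^2+3*z+1) * (real y)^2 + (real x)^2 - real (2*z+1) * real y * (real x + 1))"
      by (simp only: eq) (intro add_nonneg_nonneg a b c)
    then show ?thesis by (rule aux4)
  qed
qed

locale ag =
  fixes n :: nat and E :: "'e set" and w :: "nat \<Rightarrow> real"
    and Str :: "nat \<Rightarrow> 'e set set" and l :: "'e \<Rightarrow> real \<Rightarrow> real"
    and \<alpha> \<beta> :: "'e \<Rightarrow> real"
  assumes game: "is_congestion_game n E w Str l"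
    and unw: "\<forall>i\<in>{1..n}. w i = 1"
    and aff: "\<forall>e\<in>E. \<alpha> e \<ge> 0 \<and> \<beta> e \<ge> 0 \<and> (\<forall>x\<ge>0. l e x = \<alpha> e * x + \<beta> e)"
begin

lemma l_eq: "e \<in> E \<Longrightarrow> x \<ge> 0 \<Longrightarrow> l e x = \<alpha> e * x + \<beta> e" using aff by auto
lemma al: "e \<in> E \<Longrightarrow> \<alpha> e \<ge> 0" using aff by auto
lemma be: "e \<in> E \<Longrightarrow> \<beta> e \<ge> 0" using aff by auto
lemma l_nonneg: "e \<in> E \<Longrightarrow> x \<ge> 0 \<Longrightarrow> l e x \<ge> 0"
  using game unfolding is_congestion_game_def by auto
lemma finE: "finite E" using game unfolding is_congestion_game_def by auto

lemma prof_sub: "S \<in> profiles n Str \<Longrightarrow> i\<in>{1..n} \<Longrightarrow> S i \<subseteq> E"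
proof -
  assume S: "S \<in> profiles n Str" and i: "i\<in>{1..n}"
  have "S i \<in> Str i" using S i unfolding profiles_def by (simp add: PiE_iff)
  moreover have "Str i \<subseteq> Pow E" using game i unfolding is_congestion_game_def by blast
  ultimately show ?thesis by blast
qed

lemma prof_upd: "S \<in> profiles n Str \<Longrightarrow> i\<in>{1..n} \<Longrightarrow> t\<in>Str i \<Longrightarrow> S(i:=t) \<in> profiles n Str"
  unfolding profiles_def using PiE_fun_upd[of t Str i S "{1..n}"] by (simp add: insert_absorb)

lemma prof_fin: "finite (profiles n Str)"
  using game unfolding profiles_def is_congestion_game_def by (auto intro!: finite_PiE)

lemma prof_ne: "profiles n Str \<noteq> {}"
  using game unfolding profiles_def is_congestion_game_def by (auto simp: PiE_eq_empty_iff)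

definition cnt :: "(nat \<Rightarrow> 'e set) \<Rightarrow> 'e \<Rightarrow> real" where
  "cnt S e = (\<Sum>j\<in>{1..n}. if e \<in> S j then 1 else 0)"

lemma cong_eq: "congestion n w S e = cnt S e"
proof -
  have "congestion n w S e = (\<Sum>j\<in>{1..n}. if e \<in> S j then w j else 0)"
    unfolding congestion_def by (rule sum.inter_filter) simp
  also have "\<dots> = cnt S e" unfolding cnt_def using unw by (intro sum.cong) auto
  finally show ?thesis .
qed

lemma cnt_card: "cnt S e = real (card {j\<in>{1..n}. e \<in> S j})"
  unfolding cnt_def by (simp add: sum.inter_filter[symmetric])

lemma cnt_nonneg: "cnt S e \<ge> 0" by (simp add: cnt_def sum_nonneg)

lemma cnt_upd: "i \<in> {1..n} \<Longrightarrow> cnt (S(i:=t)) e = cnt (S(i:={})) e + (if e\<in>t then 1 else 0)"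
proof -
  assume i: "i \<in> {1..n}"
  have A: "cnt (S(i:=t)) e = (if e\<in>t then 1 else 0) + (\<Sum>j\<in>{1..n}-{i}. if e \<in> S j then 1 else 0)"
    unfolding cnt_def using i by (subst sum.remove[of _ i]) (auto intro!: sum.cong)
  have B: "cnt (S(i:={})) e = (\<Sum>j\<in>{1..n}-{i}. if e \<in> S j then 1 else 0)"
    unfolding cnt_def using i by (subst sum.remove[of _ i]) (auto intro!: sum.cong)
  show ?thesis using A B by simp
qed

lemma cnt_self: "i \<in> {1..n} \<Longrightarrow> cnt S e = cnt (S(i:={})) e + (if e\<in>S i then 1 else 0)"
  using cnt_upd[of i S "S i" e] by simp

lemma swap:
  assumes "\<And>i. i\<in>{1..n} \<Longrightarrow> T i \<subseteq> E"
  shows "(\<Sum>i\<in>{1..n}. \<Sum>e\<in>T i. g e) = (\<Sum>e\<in>E. cnt T e * g e)"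
proof -
  have "(\<Sum>i\<in>{1..n}. \<Sum>e\<in>T i. g e) = (\<Sum>i\<in>{1..n}. \<Sum>e\<in>E. if e \<in> T i then g e else 0)"
  proof (rule sum.cong[OF refl])
    fix i assume i: "i \<in> {1..n}"
    have "{e\<in>E. e \<in> T i} = T i" using assms[OF i] by auto
    then show "(\<Sum>e\<in>T i. g e) = (\<Sum>e\<in>E. if e \<in> T i then g e else 0)"
      using finE by (simp add: sum.inter_filter[symmetric])
  qed
  also have "\<dots> = (\<Sum>e\<in>E. \<Sum>i\<in>{1..n}. if e \<in> T i then g e else 0)"
    by (rule sum.swap)
  also have "\<dots> = (\<Sum>e\<in>E. cnt T e * g e)"
    unfolding cnt_def sum_distrib_right by (intro sum.cong refl) simp
  finally show ?thesis .
qed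

lemma sc_eq: "S \<in> profiles n Str \<Longrightarrow>
  social_cost n w l S = (\<Sum>e\<in>E. cnt S e * (\<alpha> e * cnt S e + \<beta> e))"
proof -
  assume S: "S \<in> profiles n Str"
  have "social_cost n w l S = (\<Sum>i\<in>{1..n}. \<Sum>e\<in>S i. l e (cnt S e))"
    unfolding social_cost_def player_cost_def cong_eq ..
  also have "\<dots> = (\<Sum>e\<in>E. cnt S e * l e (cnt S e))"
    using prof_sub[OF S] by (rule swap)
  also have "\<dots> = (\<Sum>e\<in>E. cnt S e * (\<alpha> e * cnt S e + \<beta> e))"
    using l_eq cnt_nonneg by (intro sum.cong) auto
  finally show ?thesis .
qed

lemma pc_nonneg: "S \<in> profiles n Str \<Longrightarrow> i \<in> {1..n} \<Longrightarrow> player_cost n w l S i \<ge> 0"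
  unfolding player_cost_def cong_eq
  using prof_sub l_nonneg cnt_nonneg by (intro sum_nonneg) blast

lemma sc_nonneg: "S \<in> profiles n Str \<Longrightarrow> social_cost n w l S \<ge> 0"
  unfolding social_cost_def using pc_nonneg by (intro sum_nonneg) auto

definition g :: "'e \<Rightarrow> real \<Rightarrow> real" where
  "g e x = \<alpha> e * x * (x + 1) / 2 + \<beta> e * x"

definition Phi :: "(nat \<Rightarrow> 'e set) \<Rightarrow> real" where
  "Phi S = (\<Sum>e\<in>E. g e (cnt S e))"

lemma g_step: "g e (K + 1) = g e K + (\<alpha> e * (K + 1) + \<beta> e)"
  unfolding g_def by (simp add: field_simps)

lemma pot_decomp:
  assumes i: "i \<in> {1..n}" and t: "t \<subseteq> E"
  shows "Phi (S(i:=t)) = (\<Sum>e\<in>E. g e (cnt (S(i:={})) e)) + player_cost n w l (S(i:=t)) i"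
proof -
  have pc: "player_cost n w l (S(i:=t)) i = (\<Sum>e\<in>E. if e \<in> t then \<alpha> e * (cnt (S(i:={})) e + 1) + \<beta> e else 0)"
  proof -
    have "player_cost n w l (S(i:=t)) i = (\<Sum>e\<in>t. \<alpha> e * (cnt (S(i:={})) e + 1) + \<beta> e)"
      unfolding player_cost_def cong_eq using t
      by (intro sum.cong) (auto simp: cnt_upd[OF i, of S t] l_eq cnt_nonneg add_nonneg_nonneg)
    also have "\<dots> = (\<Sum>e\<in>E. if e \<in> t then \<alpha> e * (cnt (S(i:={})) e + 1) + \<beta> e else 0)"
    proof -
      have "{e\<in>E. e \<in> t} = t" using t by auto
      then show ?thesis using finE by (simp add: sum.inter_filter[symmetric])
    qed
    finally show ?thesis .
  qed
  have "Phi (S(i:=t)) = (\<Sum>e\<in>E. g e (cnt (S(i:={})) e) + (if e \<in> t then \<alpha> e * (cnt (S(i:={})) e + 1) + \<beta> e else 0))"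
    unfolding Phi_def
  proof (rule sum.cong[OF refl])
    fix e assume "e \<in> E"
    show "g e (cnt (S(i := t)) e) = g e (cnt (S(i:={})) e) + (if e \<in> t then \<alpha> e * (cnt (S(i:={})) e + 1) + \<beta> e else 0)"
      by (cases "e \<in> t") (simp_all add: cnt_upd[OF i, of S t] g_step)
  qed
  also have "\<dots> = (\<Sum>e\<in>E. g e (cnt (S(i:={})) e)) + player_cost n w l (S(i:=t)) i"
    by (simp add: pc sum.distrib)
  finally show ?thesis .
qed

lemma pot_diff:
  assumes S: "S \<in> profiles n Str" and i: "i \<in> {1..n}" and t: "t \<in> Str i"
  shows "Phi (S(i:=t)) - Phi S = player_cost n w l (S(i:=t)) i - player_cost n w l S i"
proof -
  have tE: "t \<subseteq> E" using prof_sub[OF prof_upd[OF S i t] i] by simp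
  have "Phi (S(i:=S i)) = (\<Sum>e\<in>E. g e (cnt (S(i:={})) e)) + player_cost n w l (S(i:=S i)) i"
    by (rule pot_decomp[OF i prof_sub[OF S i]])
  then have "Phi S = (\<Sum>e\<in>E. g e (cnt (S(i:={})) e)) + player_cost n w l S i" by simp
  moreover have "Phi (S(i:=t)) = (\<Sum>e\<in>E. g e (cnt (S(i:={})) e)) + player_cost n w l (S(i:=t)) i"
    by (rule pot_decomp[OF i tE])
  ultimately show ?thesis by simp
qed

lemma PNE_exists:
  assumes eps: "eps \<ge> 0"
  shows "\<exists>S. is_eps_PNE n w Str l eps S"
proof -
  let ?P = "profiles n Str"
  have fin: "finite (Phi ` ?P)" using prof_fin by simp
  have ne: "Phi ` ?P \<noteq> {}" using prof_ne by simp
  obtain S where S: "S \<in> ?P" and m: "Phi S = Min (Phi ` ?P)" using Min_in[OF fin ne] by auto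
  have "is_eps_PNE n w Str l eps S"
    unfolding is_eps_PNE_def
  proof (intro conjI S ballI)
    fix i t assume i: "i \<in> {1..n}" and t: "t \<in> Str i"
    have "Phi S \<le> Phi (S(i:=t))" using m Min_le[OF fin] prof_upd[OF S i t] by simp
    then have "player_cost n w l S i \<le> player_cost n w l (S(i:=t)) i"
      using pot_diff[OF S i t] by simp
    moreover have "player_cost n w l (S(i:=t)) i \<ge> 0" using pc_nonneg[OF prof_upd[OF S i t] i] .
    ultimately show "player_cost n w l S i \<le> (1 + eps) * player_cost n w l (S(i:=t)) i"
    proof -
      have "eps * player_cost n w l (S(i:=t)) i \<ge> 0" using eps \<open>player_cost n w l (S(i:=t)) i \<ge> 0\<close> by simp
      then show ?thesis using \<open>player_cost n w l S i \<le> player_cost n w l (S(i:=t)) i\<close> by (simp add: distrib_right)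
    qed
  qed
  then show ?thesis by blast
qed

lemma dev_bound:
  assumes S: "S \<in> profiles n Str" and T: "T \<in> profiles n Str"
  shows "(\<Sum>i\<in>{1..n}. player_cost n w l (S(i:=T i)) i)
     \<le> (\<Sum>e\<in>E. cnt T e * (\<alpha> e * (cnt S e + 1) + \<beta> e))"
proof -
  have "(\<Sum>i\<in>{1..n}. player_cost n w l (S(i:=T i)) i)
      \<le> (\<Sum>i\<in>{1..n}. \<Sum>e\<in>T i. \<alpha> e * (cnt S e + 1) + \<beta> e)"
  proof (intro sum_mono)
    fix i assume i: "i \<in> {1..n}"
    show "player_cost n w l (S(i:=T i)) i \<le> (\<Sum>e\<in>T i. \<alpha> e * (cnt S e + 1) + \<beta> e)"
      unfolding player_cost_def cong_eq fun_upd_same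
    proof (rule sum_mono)
      fix e assume eT: "e \<in> T i"
      have eE: "e \<in> E" using prof_sub[OF T i] eT by auto
      have c: "cnt (S(i:=T i)) e = cnt (S(i:={})) e + 1" using cnt_upd[OF i, of S "T i" e] eT by simp
      have "cnt (S(i:={})) e \<le> cnt S e" using cnt_self[OF i, of S e] by simp
      then have "cnt (S(i:=T i)) e \<le> cnt S e + 1" using c by simp
      moreover have "cnt (S(i:=T i)) e \<ge> 0" by (rule cnt_nonneg)
      ultimately show "l e (cnt (S(i:=T i)) e) \<le> \<alpha> e * (cnt S e + 1) + \<beta> e"
        using l_eq[OF eE] al[OF eE] by (simp add: mult_left_mono)
    qed
  qed
  also have "\<dots> = (\<Sum>e\<in>E. cnt T e * (\<alpha> e * (cnt S e + 1) + \<beta> e))"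
    using prof_sub[OF T] by (rule swap)
  finally show ?thesis .
qed

lemma res_ineq:
  fixes z :: nat
  assumes eE: "e \<in> E"
  shows "(2 * real z + 1) * (cnt T e * (\<alpha> e * (cnt S e + 1) + \<beta> e))
     \<le> (real z^2 + 3 * real z + 1) * (cnt T e * (\<alpha> e * cnt T e + \<beta> e)) + cnt S e * (\<alpha> e * cnt S e + \<beta> e)"
proof -
  obtain x where x: "cnt S e = real x" using cnt_card by blast
  obtain y where y: "cnt T e = real y" using cnt_card by blast
  have k: "(2 * real z + 1) * real y * (real x + 1) \<le> (real z^2 + 3 * real z + 1) * (real y)^2 + (real x)^2"
    using key_ineq[of z y x] by (simp add: algebra_simps)
  have ka: "\<alpha> e * ((2 * real z + 1) * real y * (real x + 1)) \<le> \<alpha> e * ((real z^2 + 3 * real z + 1) * (real y)^2 + (real x)^2)"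
    using mult_left_mono[OF k al[OF eE]] .
  have c: "2 * real z + 1 \<le> real z^2 + 3 * real z + 1" by simp
  have kb1: "(2 * real z + 1) * (real y * \<beta> e) \<le> (real z^2 + 3 * real z + 1) * (real y * \<beta> e)"
    using c be[OF eE] by (intro mult_right_mono) auto
  have kb2: "0 \<le> real x * \<beta> e" using be[OF eE] by simp
  show ?thesis unfolding x y using ka kb1 kb2
    by (simp add: algebra_simps power2_eq_square)
qed

lemma main_bound:
  fixes z :: nat
  assumes P: "is_eps_PNE n w Str l eps S" and eps: "eps \<ge> 0" and z: "2 * real z > eps"
  shows "social_cost n w l S / opt_cost n w Str l
     \<le> (1 + eps) * (real z^2 + 3 * real z + 1) / (2 * real z - eps)"
proof -
  let ?P = "profiles n Str"
  have S: "S \<in> ?P" using P unfolding is_eps_PNE_def by auto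
  have fin: "finite (social_cost n w l ` ?P)" using prof_fin by simp
  have ne: "social_cost n w l ` ?P \<noteq> {}" using prof_ne by simp
  obtain T where T: "T \<in> ?P" and Topt: "social_cost n w l T = opt_cost n w Str l"
    using Min_in[OF fin ne] unfolding opt_cost_def by auto
  define opt where "opt = opt_cost n w Str l"
  have opt0: "opt \<ge> 0" using sc_nonneg[OF T] Topt opt_def by simp
  define D where "D = (\<Sum>e\<in>E. cnt T e * (\<alpha> e * (cnt S e + 1) + \<beta> e))"
  have h1: "social_cost n w l S \<le> (1 + eps) * (\<Sum>i\<in>{1..n}. player_cost n w l (S(i:=T i)) i)"
    unfolding social_cost_def sum_distrib_left
  proof (rule sum_mono)
    fix i assume i: "i \<in> {1..n}"
    have "T i \<in> Str i" using T i unfolding profiles_def by auto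
    then show "player_cost n w l S i \<le> (1 + eps) * player_cost n w l (S(i:=T i)) i"
      using P i unfolding is_eps_PNE_def by auto
  qed
  also have "\<dots> \<le> (1 + eps) * D"
    unfolding D_def using dev_bound[OF S T] eps by (intro mult_left_mono) auto
  finally have h2: "social_cost n w l S \<le> (1 + eps) * D" .
  have h3: "(2 * real z + 1) * D \<le> (real z^2 + 3 * real z + 1) * opt + social_cost n w l S"
  proof -
    have "(2 * real z + 1) * D = (\<Sum>e\<in>E. (2 * real z + 1) * (cnt T e * (\<alpha> e * (cnt S e + 1) + \<beta> e)))"
      unfolding D_def by (simp add: sum_distrib_left)
    also have "\<dots> \<le> (\<Sum>e\<in>E. (real z^2 + 3 * real z + 1) * (cnt T e * (\<alpha> e * cnt T e + \<beta> e)) + cnt S e * (\<alpha> e * cnt S e + \<beta> e))"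
      by (intro sum_mono res_ineq)
    also have "\<dots> = (real z^2 + 3 * real z + 1) * opt + social_cost n w l S"
      unfolding sum.distrib sum_distrib_left[symmetric] sc_eq[OF S] sc_eq[OF T, symmetric] Topt opt_def ..
    finally show ?thesis .
  qed
  have h4: "(2 * real z - eps) * social_cost n w l S \<le> (1 + eps) * (real z^2 + 3 * real z + 1) * opt"
  proof -
    have "(2 * real z + 1) * social_cost n w l S \<le> (2 * real z + 1) * ((1 + eps) * D)"
      using h2 by (rule mult_left_mono) simp
    also have "\<dots> = (1 + eps) * ((2 * real z + 1) * D)" by (simp add: algebra_simps)
    also have "\<dots> \<le> (1 + eps) * ((real z^2 + 3 * real z + 1) * opt + social_cost n w l S)"
      using h3 eps by (intro mult_left_mono) auto
    finally show ?thesis by (simp add: algebra_simps)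
  qed
  have pos: "2 * real z - eps > 0" using z by simp
  have B0: "(1 + eps) * (real z^2 + 3 * real z + 1) / (2 * real z - eps) \<ge> 0"
    using pos eps by simp
  show ?thesis
  proof (cases "opt = 0")
    case True then show ?thesis using B0 opt_def by simp
  next
    case False
    then have op: "opt > 0" using opt0 by simp
    have "social_cost n w l S \<le> (1 + eps) * (real z^2 + 3 * real z + 1) * opt / (2 * real z - eps)"
      using h4 pos by (simp add: le_divide_eq mult.commute)
    then show ?thesis using op unfolding opt_def[symmetric]
      by (simp add: divide_le_eq mult.commute mult.left_commute)
  qed
qed

end


theorem mainTheorem2:
  fixes n :: nat and E :: "'e set" and w :: "nat \<Rightarrow> real"
    and Str :: "nat \<Rightarrow> 'e set set" and l :: "'e \<Rightarrow> real \<Rightarrow> real"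
    and \<alpha> \<beta> :: "'e \<Rightarrow> real" and eps :: real
  assumes game: "is_congestion_game n E w Str l"
    and unweighted: "\<forall>i\<in>{1..n}. w i = 1"
    and affine: "\<forall>e\<in>E. \<alpha> e \<ge> 0 \<and> \<beta> e \<ge> 0 \<and> (\<forall>x\<ge>0. l e x = \<alpha> e * x + \<beta> e)"
    and eps: "eps \<ge> 0"
  shows "let \<psi> = (1 + eps + sqrt (eps^2 + 6 * eps + 5)) / 2;
             z = real_of_int \<lfloor>\<psi>\<rfloor>
         in eps_PoA n w Str l eps \<le> (1 + eps) * (z^2 + 3 * z + 1) / (2 * z - eps)"
proof -
  interpret ag n E w Str l \<alpha> \<beta>
    using game unweighted affine by unfold_locales
  define \<psi> where "\<psi> = (1 + eps + sqrt (eps^2 + 6 * eps + 5)) / 2"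
  have "eps + 1 < sqrt (eps^2 + 6 * eps + 5)"
    using eps by (intro real_less_rsqrt) (simp add: power2_eq_square algebra_simps)
  then have psi: "1 + eps < \<psi>" unfolding \<psi>_def by simp
  have fl1: "\<lfloor>1 + eps\<rfloor> \<le> \<lfloor>\<psi>\<rfloor>" using psi by (intro floor_mono) simp
  have "eps < real_of_int \<lfloor>eps\<rfloor> + 1" by (rule real_of_int_floor_add_one_gt)
  then have zgt: "eps < real_of_int \<lfloor>\<psi>\<rfloor>" using fl1 by linarith
  have zge: "\<lfloor>\<psi>\<rfloor> \<ge> 0" using zgt eps by linarith
  define zn where "zn = nat \<lfloor>\<psi>\<rfloor>"
  have zeq: "real_of_int \<lfloor>\<psi>\<rfloor> = real zn" unfolding zn_def using zge by simp
  have z2: "2 * real zn > eps" using zgt zeq eps by linarith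
  let ?B = "(1 + eps) * (real zn^2 + 3 * real zn + 1) / (2 * real zn - eps)"
  let ?A = "{social_cost n w l S / opt_cost n w Str l | S. is_eps_PNE n w Str l eps S}"
  have Aeq: "?A = (\<lambda>S. social_cost n w l S / opt_cost n w Str l) ` {S. is_eps_PNE n w Str l eps S}"
    by auto
  have sub: "{S. is_eps_PNE n w Str l eps S} \<subseteq> profiles n Str"
    unfolding is_eps_PNE_def by auto
  have finA: "finite ?A" unfolding Aeq using finite_subset[OF sub prof_fin] by simp
  have neA: "?A \<noteq> {}" using PNE_exists[OF eps] by auto
  have "Max ?A \<le> ?B"
  proof (rule Max.boundedI[OF finA neA])
    fix a assume "a \<in> ?A"
    then obtain S where S: "is_eps_PNE n w Str l eps S" and a: "a = social_cost n w l S / opt_cost n w Str l"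
      by auto
    show "a \<le> ?B" unfolding a by (rule main_bound[OF S eps z2])
  qed
  then show ?thesis unfolding Let_def \<psi>_def[symmetric] zeq eps_PoA_def .
qed

end
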